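(* Let $\{\rho_n\}_{n\ge0},\{\beta_n\}_{n\ge0},\{\tau_n\}_{n\ge0}$ be real sequences with $\rho_n\ne0$, $\tau_n\neq0$ and $-2<\tau_n\rho_n^{-1}<0$ for $n\ge0$, $\beta_0\neq0,\pm1$, $\beta_n\neq0$ for $n\ge1$, and $\tau_1\rho_1^{-1}=\rho_0\beta_0^{-1}(\beta_0^2-1)$. Let $\mathcal{P}_0(\lambda)=1$, $\mathcal{P}_1(\lambda)=\rho_0(\lambda-\beta_0)$, $\mathcal{P}_{n+1}(\lambda)=\rho_n(\lambda-\beta_n)\mathcal{P}_n(\lambda)+\tau_n\lambda\,\mathcal{P}_{n-1}(\lambda)$, $n\ge1$. Let $\{\alpha_n\}_{n\ge0}$ be nonzero reals with $\alpha_0=\tau_0\rho_0^{-1}$, $\alpha_1=\rho_0(\beta_0-1)$, and for $n\ge2$ $$\alpha_n=-(\rho_{n-1}-\alpha_{n-1}^{-1}\tau_{n-1})+\rho_{n-1}\beta_{n-1},$$ and suppose in addition that for $n\ge2$ $$\alpha_n\rho_n=(2\rho_n+\tau_n)(\rho_{n-1}\alpha_{n-1}-\tau_{n-1})+\tau_n,\qquad \alpha_n\rho_n=-\rho_{n-1}\beta_{n-1}(2\rho_n+\tau_n)\alpha_{n-1}.$$ With $p_n=\alpha_{n-1}\rho_{n-1}-\tau_{n-1}$, $q_n=\alpha_{n-1}(\alpha_n-\rho_{n-1}\beta_{n-1})$, assume $p_{n+1}\neq0$, $q_n\ne0$ for $n\ge1$. Put $\mathcal{Q}_n(\lambda)=\mathcal{P}_n(\lambda)+\alpha_n\mathcal{P}_{n-1}(\lambda)$,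 $n\ge1$, let $\kappa_n=\rho_0\rho_1\cdots\rho_n$ (the leading coefficient of $\mathcal{Q}_{n+1}$), and define $\mathcal{R}_n(\lambda)=\kappa_n^{-1}(\lambda-1)^{-1}\mathcal{Q}_{n+1}(\lambda)$, $n\ge0$. Then $\{\mathcal{R}_n(\lambda)\}_{n\ge1}$ is a sequence of para-orthogonal polynomials.
   Context: A sequence $\{\mathcal{R}_n\}_{n\ge1}$ of polynomials with $\deg\mathcal{R}_n=n$ is called para-orthogonal (in the sense of Jones, Njåstad and Thron) if there exists a nontrivial probability measure $\mu$ on the unit circle, with monic orthogonal polynomials $\phi_n$, such that for each $n\ge1$, $\mathcal{R}_n(\lambda)=c_n\big(\phi_n(\lambda)+\omega_n\phi_n^*(\lambda)\big)$ for some $c_n\neq0$ and $|\omega_n|=1$, where $\phi_n^*(\lambda)=\lambda^n\overline{\phi_n(1/\bar\lambda)}$. (Under the hypotheses, $\mathcal{Q}_{n+1}(1)=0$, so $\mathcal{R}_n$ is a monic polynomial of degree $n$.) *)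

theory Defs
  imports "HOL-Probability.Probability" "HOL-Computational_Algebra.Polynomial"
begin

text \<open>Reversed polynomial phi^*(z) = z^n conj(phi(1/conj z)) for a polynomial of degree n:
  conjugate the coefficients and reverse their order.\<close>
definition reversed_poly :: "complex poly \<Rightarrow> complex poly" where
  "reversed_poly p = reflect_poly (map_poly cnj p)"

definition nontrivial_circle_prob :: "complex measure \<Rightarrow> bool" where
  "nontrivial_circle_prob \<mu> \<longleftrightarrow>
     prob_space \<mu> \<and> sets \<mu> = sets borel \<and> (AE z in \<mu>. cmod z = 1) \<and>
     (\<forall>F. finite F \<longrightarrow> measure \<mu> (UNIV - F) > 0)"

definition monic_OPUC :: "complex measure \<Rightarrow> (nat \<Rightarrow> complex poly) \<Rightarrow> bool" where
  "monic_OPUC \<mu> \<phi> \<longleftrightarrow>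
     (\<forall>n. degree (\<phi> n) = n \<and> lead_coeff (\<phi> n) = 1 \<and>
          (\<forall>k<n. integral\<^sup>L \<mu> (\<lambda>z. poly (\<phi> n) z * cnj (z ^ k)) = 0))"

definition para_orthogonal :: "(nat \<Rightarrow> complex poly) \<Rightarrow> bool" where
  "para_orthogonal R \<longleftrightarrow>
     (\<forall>n\<ge>1. degree (R n) = n) \<and>
     (\<exists>\<mu> \<phi>. nontrivial_circle_prob \<mu> \<and> monic_OPUC \<mu> \<phi> \<and>
        (\<forall>n\<ge>1. \<exists>c \<omega>. c \<noteq> 0 \<and> cmod \<omega> = 1 \<and>
             R n = smult c (\<phi> n + smult \<omega> (reversed_poly (\<phi> n)))))"

fun Ppoly :: "(nat \<Rightarrow> real) \<Rightarrow> (nat \<Rightarrow> real) \<Rightarrow> (nat \<Rightarrow> real) \<Rightarrow> nat \<Rightarrow> real poly" where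
  "Ppoly \<rho> \<beta> \<tau> 0 = 1"
| "Ppoly \<rho> \<beta> \<tau> (Suc 0) = smult (\<rho> 0) [:- \<beta> 0, 1:]"
| "Ppoly \<rho> \<beta> \<tau> (Suc (Suc n)) =
     smult (\<rho> (Suc n)) ([:- \<beta> (Suc n), 1:] * Ppoly \<rho> \<beta> \<tau> (Suc n))
     + smult (\<tau> (Suc n)) ([:0, 1:] * Ppoly \<rho> \<beta> \<tau> n)"

definition Qpoly :: "(nat \<Rightarrow> real) \<Rightarrow> (nat \<Rightarrow> real) \<Rightarrow> (nat \<Rightarrow> real) \<Rightarrow> (nat \<Rightarrow> real) \<Rightarrow> nat \<Rightarrow> real poly" where
  "Qpoly \<rho> \<beta> \<tau> \<alpha> n = Ppoly \<rho> \<beta> \<tau> n + smult (\<alpha> n) (Ppoly \<rho> \<beta> \<tau> (n - 1))"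

definition Rpoly :: "(nat \<Rightarrow> real) \<Rightarrow> (nat \<Rightarrow> real) \<Rightarrow> (nat \<Rightarrow> real) \<Rightarrow> (nat \<Rightarrow> real) \<Rightarrow> nat \<Rightarrow> real poly" where
  "Rpoly \<rho> \<beta> \<tau> \<alpha> n =
     smult (inverse (\<Prod>i\<le>n. \<rho> i)) (Qpoly \<rho> \<beta> \<tau> \<alpha> (Suc n) div [:-1, 1:])"

end

theory Submission
  imports Defs
begin

lemma stepJ:
  fixes x Pn Pm Tn Tm K r0 b0 ta0 a0 a1 :: real
  assumes HJ: "Pn + a0*Pm = K*(x-1)*Tm"
    and HI: "(a0*r0 - ta0)*Pn = K*(a0*r0*Tn - ta0*x*Tm)"
    and rec: "a1 = - (r0 - ta0/a0) + r0*b0"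
    and a0: "a0 \<noteq> 0"
  shows "r0*(x-b0)*Pn + ta0*x*Pm + a1*Pn = K*r0*(x-1)*Tn"
proof -
  have rec': "a0*a1 = -r0*a0 + ta0 + r0*b0*a0" using rec a0 by (simp add: field_simps)
  have "a0*(r0*(x-b0)*Pn + ta0*x*Pm + a1*Pn) = a0*(K*r0*(x-1)*Tn)"
  proof -
    have "a0*(r0*(x-b0)*Pn + ta0*x*Pm + a1*Pn) = r0*(x-b0)*a0*Pn + ta0*x*(a0*Pm) + (a0*a1)*Pn"
      by (simp add: algebra_simps)
    also have "\<dots> = r0*(x-b0)*a0*Pn + ta0*x*(K*(x-1)*Tm - Pn) + (-r0*a0 + ta0 + r0*b0*a0)*Pn"
      using HJ rec' by algebra
    also have "\<dots> = (x-1)*((a0*r0 - ta0)*Pn + ta0*x*K*Tm)"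
      by (simp add: algebra_simps)
    also have "\<dots> = (x-1)*(K*(a0*r0*Tn - ta0*x*Tm) + ta0*x*K*Tm)" using HI by simp
    also have "\<dots> = a0*(K*r0*(x-1)*Tn)" by (simp add: algebra_simps)
    finally show ?thesis .
  qed
  thus ?thesis using a0 by simp
qed

lemma stepI:
  fixes x Pn Pm Tn Tm K r0 b0 ta0 a0 r1 ta1 a1 :: real
  assumes HJ: "Pn + a0*Pm = K*(x-1)*Tm"
    and HI: "(a0*r0 - ta0)*Pn = K*(a0*r0*Tn - ta0*x*Tm)"
    and rec: "a1 = - (r0 - ta0/a0) + r0*b0"
    and e1: "a1*r1 = (2*r1+ta1)*(r0*a0 - ta0) + ta1"
    and e2: "a1*r1 = -r0*b0*(2*r1+ta1)*a0"
    and a0: "a0 \<noteq> 0" and r0: "r0 \<noteq> 0" and b0: "b0 \<noteq> 0" and r1: "r1 \<noteq> 0"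
    and p1: "a0*r0 - ta0 \<noteq> 0" and s: "2*r1+ta1 \<noteq> 0"
  shows "(a1*r1 - ta1)*(r0*(x-b0)*Pn + ta0*x*Pm)
     = K*r0*(a1*r1*((x+1)*Tn - ((-ta0/r0)*(2+ta1/r1))*x*Tm) - ta1*x*Tn)"
proof -
  define B where "B = r0*b0*a0"
  define p1 where "p1 = a0*r0 - ta0"
  define p2 where "p2 = a1*r1 - ta1"
  define g where "g = (-ta0/r0)*(2+ta1/r1)"
  have Bnz: "B \<noteq> 0" using a0 r0 b0 by (simp add: B_def)
  have p1nz: "p1 \<noteq> 0" using p1 by (simp add: p1_def)
  have k1: "-p2*B = a1*r1*p1"
  proof -
    have "(-p2*B - a1*r1*p1)*(2*r1+ta1) = 0"
      using e1 e2 unfolding p2_def B_def p1_def by algebra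
    thus ?thesis using s by simp
  qed
  have rec': "a0*a1 = -r0*a0 + ta0 + r0*b0*a0" using rec a0 by (simp add: field_simps)
  have e2': "a1 = -B*(2+ta1/r1)" using e2 r1 unfolding B_def by (simp add: field_simps)
  have k2: "p1 = B*(1 + a0*(2+ta1/r1))"
  proof -
    have "a0*a1 = B - p1" using rec' unfolding B_def p1_def by (simp add: algebra_simps)
    thus ?thesis using e2' by (simp add: algebra_simps)
  qed
  have gB: "ta0*(B - p1) = a0*r0*g*B"
    unfolding g_def using k2 r0 by (simp add: field_simps)
  have S1: "a0*(r0*(x-b0)*Pn + ta0*x*Pm) = (p1*x - B)*Pn + ta0*K*x*(x-1)*Tm"
  proof -
    have "a0*(r0*(x-b0)*Pn + ta0*x*Pm) = a0*r0*(x-b0)*Pn + ta0*x*(a0*Pm)" by (simp add: algebra_simps)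
    also have "\<dots> = a0*r0*(x-b0)*Pn + ta0*x*(K*(x-1)*Tm - Pn)" using HJ by algebra
    also have "\<dots> = (p1*x - B)*Pn + ta0*K*x*(x-1)*Tm" unfolding p1_def B_def by (simp add: algebra_simps)
    finally show ?thesis .
  qed
  have S2: "a0*p1*(r0*(x-b0)*Pn + ta0*x*Pm) = (p1*x - B)*K*(a0*r0*Tn - ta0*x*Tm) + p1*ta0*K*x*(x-1)*Tm"
  proof -
    have "a0*p1*(r0*(x-b0)*Pn + ta0*x*Pm) = p1*(a0*(r0*(x-b0)*Pn + ta0*x*Pm))" by simp
    also have "\<dots> = (p1*x - B)*(p1*Pn) + p1*ta0*K*x*(x-1)*Tm" using S1 by algebra
    also have "\<dots> = (p1*x - B)*K*(a0*r0*Tn - ta0*x*Tm) + p1*ta0*K*x*(x-1)*Tm"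
      using HI unfolding p1_def by simp
    finally show ?thesis .
  qed
  have "B*(a0*p1*(p2*(r0*(x-b0)*Pn + ta0*x*Pm))) = B*(a0*p1*(K*r0*(a1*r1*((x+1)*Tn - g*x*Tm) - ta1*x*Tn)))"
  proof -
    have "B*(a0*p1*(p2*(r0*(x-b0)*Pn + ta0*x*Pm))) = B*p2*((p1*x - B)*K*(a0*r0*Tn - ta0*x*Tm) + p1*ta0*K*x*(x-1)*Tm)"
      using S2 by algebra
    also have "\<dots> = (p2*B)*K*(p1*x*a0*r0*Tn - B*a0*r0*Tn + (B*ta0 - p1*ta0)*x*Tm)"
      by (simp add: algebra_simps)
    also have "\<dots> = (-a1*r1*p1)*K*(p1*x*a0*r0*Tn - B*a0*r0*Tn + (ta0*(B - p1))*x*Tm)"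
      using k1 by algebra
    also have "\<dots> = (-a1*r1*p1)*K*(p1*x*a0*r0*Tn - B*a0*r0*Tn + (a0*r0*g*B)*x*Tm)"
      using gB by simp
    also have "\<dots> = B*(a0*p1*K*r0*(p2*x*Tn + a1*r1*Tn - a1*r1*g*x*Tm))"
      using k1 by algebra
    also have "\<dots> = B*(a0*p1*(K*r0*(a1*r1*((x+1)*Tn - g*x*Tm) - ta1*x*Tn)))"
      unfolding p2_def by (simp add: algebra_simps)
    finally show ?thesis .
  qed
  hence "p2*(r0*(x-b0)*Pn + ta0*x*Pm) = K*r0*(a1*r1*((x+1)*Tn - g*x*Tm) - ta1*x*Tn)"
    using Bnz a0 p1nz by simp
  thus ?thesis unfolding p2_def g_def .
qed

locale mt5 =
  fixes \<rho> \<beta> \<tau> \<alpha> :: "nat \<Rightarrow> real"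
  assumes rho_nz: "\<And>n. \<rho> n \<noteq> 0"
    and tau_nz: "\<And>n. \<tau> n \<noteq> 0"
    and ratio: "\<And>n. -2 < \<tau> n / \<rho> n \<and> \<tau> n / \<rho> n < 0"
    and beta0: "\<beta> 0 \<noteq> 0" "\<beta> 0 \<noteq> 1" "\<beta> 0 \<noteq> -1"
    and beta_nz: "\<And>n. n \<ge> 1 \<Longrightarrow> \<beta> n \<noteq> 0"
    and tau1: "\<tau> 1 / \<rho> 1 = \<rho> 0 / \<beta> 0 * ((\<beta> 0)\<^sup>2 - 1)"
    and alpha_nz: "\<And>n. \<alpha> n \<noteq> 0"
    and alpha0: "\<alpha> 0 = \<tau> 0 / \<rho> 0"
    and alpha1: "\<alpha> 1 = \<rho> 0 * (\<beta> 0 - 1)"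
    and alpha_rec: "\<And>n. n \<ge> 2 \<Longrightarrow>
          \<alpha> n = - (\<rho> (n - 1) - \<tau> (n - 1) / \<alpha> (n - 1)) + \<rho> (n - 1) * \<beta> (n - 1)"
    and extra1: "\<And>n. n \<ge> 2 \<Longrightarrow>
          \<alpha> n * \<rho> n = (2 * \<rho> n + \<tau> n) * (\<rho> (n - 1) * \<alpha> (n - 1) - \<tau> (n - 1)) + \<tau> n"
    and extra2: "\<And>n. n \<ge> 2 \<Longrightarrow>
          \<alpha> n * \<rho> n = - \<rho> (n - 1) * \<beta> (n - 1) * (2 * \<rho> n + \<tau> n) * \<alpha> (n - 1)"
    and p_nz: "\<And>n. n \<ge> 1 \<Longrightarrow> \<alpha> n * \<rho> n - \<tau> n \<noteq> 0"
    and q_nz: "\<And>n. n \<ge> 1 \<Longrightarrow> \<alpha> (n - 1) * (\<alpha> n - \<rho> (n - 1) * \<beta> (n - 1)) \<noteq> 0"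
begin

definition tt :: "nat \<Rightarrow> real" where "tt n = \<tau> n / \<rho> n"
definition gg :: "nat \<Rightarrow> real" where "gg n = (- tt n) * (2 + tt (Suc n))"
definition kap :: "nat \<Rightarrow> real" where "kap n = (\<Prod>i\<le>n. \<rho> i)"

fun Tp :: "nat \<Rightarrow> real poly" where
  "Tp 0 = 1"
| "Tp (Suc 0) = [:1, 1:]"
| "Tp (Suc (Suc k)) = [:1, 1:] * Tp (Suc k) - smult (gg (Suc k)) ([:0, 1:] * Tp k)"

lemma s_nz: "2 * \<rho> n + \<tau> n \<noteq> 0"
proof
  assume "2 * \<rho> n + \<tau> n = 0"
  hence "\<tau> n / \<rho> n = -2" using rho_nz[of n] by (simp add: field_simps)
  thus False using ratio[of n] by simp
qed

lemma kap_Suc: "kap (Suc k) = kap k * \<rho> (Suc k)"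
  unfolding kap_def by (simp add: prod.atMost_Suc)

lemma PT:
  "(\<alpha> (Suc k) * \<rho> (Suc k) - \<tau> (Suc k)) * poly (Ppoly \<rho> \<beta> \<tau> (Suc k)) x
     = kap k * (\<alpha> (Suc k) * \<rho> (Suc k) * poly (Tp (Suc k)) x - \<tau> (Suc k) * x * poly (Tp k) x)
   \<and> poly (Ppoly \<rho> \<beta> \<tau> (Suc k)) x + \<alpha> (Suc k) * poly (Ppoly \<rho> \<beta> \<tau> k) x
     = kap k * (x - 1) * poly (Tp k) x"
proof (induction k)
  case 0
  have t1: "\<tau> 1 * \<beta> 0 = \<rho> 1 * \<rho> 0 * ((\<beta> 0)\<^sup>2 - 1)"
    using tau1 rho_nz[of 1] beta0(1) by (simp add: field_simps)
  have "(\<alpha> 1 * \<rho> 1 - \<tau> 1) * (\<rho> 0 * (x - \<beta> 0)) = \<rho> 0 * (\<alpha> 1 * \<rho> 1 * (1 + x) - \<tau> 1 * x)"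
    using t1 alpha1 by (simp add: algebra_simps power2_eq_square) algebra
  moreover have "\<rho> 0 * (x - \<beta> 0) + \<alpha> 1 = \<rho> 0 * (x - 1)"
    using alpha1 by (simp add: algebra_simps)
  ultimately show ?case by (simp add: kap_def algebra_simps)
next
  case (Suc k)
  let ?Pn = "poly (Ppoly \<rho> \<beta> \<tau> (Suc k)) x"
  let ?Pm = "poly (Ppoly \<rho> \<beta> \<tau> k) x"
  let ?Tn = "poly (Tp (Suc k)) x"
  let ?Tm = "poly (Tp k) x"
  have HI: "(\<alpha> (Suc k) * \<rho> (Suc k) - \<tau> (Suc k)) * ?Pn
     = kap k * (\<alpha> (Suc k) * \<rho> (Suc k) * ?Tn - \<tau> (Suc k) * x * ?Tm)" using Suc.IH by blast
  have HJ: "?Pn + \<alpha> (Suc k) * ?Pm = kap k * (x - 1) * ?Tm" using Suc.IH by blast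
  have rec: "\<alpha> (Suc (Suc k)) = - (\<rho> (Suc k) - \<tau> (Suc k) / \<alpha> (Suc k)) + \<rho> (Suc k) * \<beta> (Suc k)"
    using alpha_rec[of "Suc (Suc k)"] by simp
  have e1: "\<alpha> (Suc (Suc k)) * \<rho> (Suc (Suc k)) = (2 * \<rho> (Suc (Suc k)) + \<tau> (Suc (Suc k))) *
      (\<rho> (Suc k) * \<alpha> (Suc k) - \<tau> (Suc k)) + \<tau> (Suc (Suc k))"
    using extra1[of "Suc (Suc k)"] by simp
  have e2: "\<alpha> (Suc (Suc k)) * \<rho> (Suc (Suc k)) = - \<rho> (Suc k) * \<beta> (Suc k) *
      (2 * \<rho> (Suc (Suc k)) + \<tau> (Suc (Suc k))) * \<alpha> (Suc k)"
    using extra2[of "Suc (Suc k)"] by simp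
  have p1: "\<alpha> (Suc k) * \<rho> (Suc k) - \<tau> (Suc k) \<noteq> 0" using p_nz[of "Suc k"] by simp
  have b: "\<beta> (Suc k) \<noteq> 0" using beta_nz[of "Suc k"] by simp
  have J: "\<rho> (Suc k) * (x - \<beta> (Suc k)) * ?Pn + \<tau> (Suc k) * x * ?Pm + \<alpha> (Suc (Suc k)) * ?Pn
      = kap k * \<rho> (Suc k) * (x - 1) * ?Tn"
    by (rule stepJ[OF HJ HI rec alpha_nz])
  have I: "(\<alpha> (Suc (Suc k)) * \<rho> (Suc (Suc k)) - \<tau> (Suc (Suc k))) *
      (\<rho> (Suc k) * (x - \<beta> (Suc k)) * ?Pn + \<tau> (Suc k) * x * ?Pm)
     = kap k * \<rho> (Suc k) * (\<alpha> (Suc (Suc k)) * \<rho> (Suc (Suc k)) *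
        ((x + 1) * ?Tn - ((- \<tau> (Suc k) / \<rho> (Suc k)) * (2 + \<tau> (Suc (Suc k)) / \<rho> (Suc (Suc k)))) * x * ?Tm)
       - \<tau> (Suc (Suc k)) * x * ?Tn)"
    by (rule stepI[OF HJ HI rec e1 e2 alpha_nz rho_nz b rho_nz p1 s_nz])
  have PP: "poly (Ppoly \<rho> \<beta> \<tau> (Suc (Suc k))) x = \<rho> (Suc k) * (x - \<beta> (Suc k)) * ?Pn + \<tau> (Suc k) * x * ?Pm"
    by (simp add: algebra_simps)
  have TT: "poly (Tp (Suc (Suc k))) x = (x + 1) * ?Tn - ((- \<tau> (Suc k) / \<rho> (Suc k)) * (2 + \<tau> (Suc (Suc k)) / \<rho> (Suc (Suc k)))) * x * ?Tm"
    by (simp add: gg_def tt_def algebra_simps)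
  show ?case using I J unfolding PP TT kap_Suc by (simp add: algebra_simps)
qed

lemma Q_eq: "Qpoly \<rho> \<beta> \<tau> \<alpha> (Suc k) = smult (kap k) ([:-1, 1:] * Tp k)"
proof -
  have "poly (Qpoly \<rho> \<beta> \<tau> \<alpha> (Suc k)) x = poly (smult (kap k) ([:-1, 1:] * Tp k)) x" for x
    using PT[of k x] by (simp add: Qpoly_def algebra_simps)
  thus ?thesis by (simp add: poly_eq_poly_eq_iff[symmetric] fun_eq_iff)
qed

lemma kap_nz: "kap k \<noteq> 0"
  unfolding kap_def using rho_nz by (simp add: prod_zero_iff)

lemma R_eq: "Rpoly \<rho> \<beta> \<tau> \<alpha> k = Tp k"
proof -
  have "Qpoly \<rho> \<beta> \<tau> \<alpha> (Suc k) div [:-1, 1:] = smult (kap k) (Tp k)"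
  proof -
    have "([:-1, 1:] * Tp k) div [:-1, 1:] = Tp k"
      by (rule nonzero_mult_div_cancel_left) simp
    thus ?thesis unfolding Q_eq by (simp only: div_smult_left)
  qed
  thus ?thesis unfolding Rpoly_def using kap_nz by (simp add: kap_def)
qed

end

fun phs :: "(nat \<Rightarrow> real) \<Rightarrow> nat \<Rightarrow> real poly \<times> real poly" where
  "phs v 0 = (1, 1)"
| "phs v (Suc k) = (pCons 0 (fst (phs v k)) - smult (v k) (snd (phs v k)),
                    snd (phs v k) - smult (v k) (pCons 0 (fst (phs v k))))"

definition ph :: "(nat \<Rightarrow> real) \<Rightarrow> nat \<Rightarrow> real poly" where "ph v k = fst (phs v k)"
definition phr :: "(nat \<Rightarrow> real) \<Rightarrow> nat \<Rightarrow> real poly" where "phr v k = snd (phs v k)"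

lemma ph_0[simp]: "ph v 0 = 1" and phr_0[simp]: "phr v 0 = 1"
  by (simp_all add: ph_def phr_def)

lemma ph_Suc: "ph v (Suc k) = pCons 0 (ph v k) - smult (v k) (phr v k)"
  and phr_Suc: "phr v (Suc k) = phr v k - smult (v k) (pCons 0 (ph v k))"
  by (simp_all add: ph_def phr_def)

lemma ph_deg: "degree (phr v k) \<le> k \<and> degree (ph v k) = k \<and> coeff (ph v k) k = 1"
proof (induction k)
  case 0 then show ?case by simp
next
  case (Suc k)
  have d1: "degree (pCons 0 (ph v k)) = Suc k" using Suc by (cases "ph v k = 0") auto
  have d2: "degree (smult (v k) (phr v k)) \<le> k" using Suc by (meson degree_smult_le order_trans)
  have c: "coeff (ph v (Suc k)) (Suc k) = 1"
    using Suc d2 by (simp add: ph_Suc coeff_eq_0)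
  have "degree (ph v (Suc k)) \<le> Suc k"
    unfolding ph_Suc using d1 d2 by (intro degree_diff_le) auto
  hence dd: "degree (ph v (Suc k)) = Suc k" using c
    by (metis le_degree le_antisym zero_neq_one)
  have "degree (phr v (Suc k)) \<le> Suc k"
    unfolding phr_Suc using d1 Suc by (intro degree_diff_le) (auto intro: order_trans[OF degree_smult_le])
  with c dd show ?case by simp
qed

lemma ph_monic: "degree (ph v k) = k" "coeff (ph v k) k = 1" "lead_coeff (ph v k) = 1"
  using ph_deg[of v k] by auto

lemma ph_nz: "ph v k \<noteq> 0"
  using ph_monic(2)[of v k] by auto

lemma phr_eval: "x \<noteq> 0 \<Longrightarrow> poly (phr v k) x = x ^ k * poly (ph v k) (inverse x)"
proof (induction k arbitrary: x)
  case 0 then show ?case by simp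
next
  case (Suc k)
  have h1: "poly (phr v k) x = x ^ k * poly (ph v k) (inverse x)" using Suc by blast
  have h2: "poly (phr v k) (inverse x) = (inverse x) ^ k * poly (ph v k) x"
    using Suc.IH[of "inverse x"] Suc.prems by simp
  have h3: "poly (ph v k) x = x ^ k * poly (phr v k) (inverse x)"
    using h2 Suc.prems by (simp add: field_simps power_inverse)
  show ?case using h1 h3 Suc.prems by (simp add: ph_Suc phr_Suc field_simps)
qed

lemma phr_reflect: "phr v k = reflect_poly (ph v k)"
proof -
  have "poly (phr v k) x = poly (reflect_poly (ph v k)) x" if "x \<noteq> 0" for x
    using that by (simp add: phr_eval poly_reflect_poly_nz ph_monic)
  hence A: "\<forall>x\<in>UNIV - {0}. poly (phr v k - reflect_poly (ph v k)) x = 0" by simp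
  have B: "infinite (UNIV - {0::real})" by (simp add: infinite_UNIV_char_0)
  have "phr v k - reflect_poly (ph v k) = 0"
  proof (rule ccontr)
    assume nz: "phr v k - reflect_poly (ph v k) \<noteq> 0"
    have "UNIV - {0} \<subseteq> {x. poly (phr v k - reflect_poly (ph v k)) x = 0}"
      using A by auto
    moreover have "finite {x. poly (phr v k - reflect_poly (ph v k)) x = 0}"
      by (rule poly_roots_finite[OF nz])
    ultimately show False using \<open>infinite (UNIV - {0::real})\<close> finite_subset by blast
  qed
  thus ?thesis by simp
qed

context mt5 begin

fun av :: "nat \<Rightarrow> real" where
  "av 0 = -1"
| "av (Suc k) = gg (Suc k) / (1 - av k) - 1"

declare av.simps(2)[simp del]

lemma gg_pos: "gg n > 0"
  using ratio[of n] ratio[of "Suc n"] unfolding gg_def tt_def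
  by (intro mult_pos_pos) auto

lemma av_bounds: "av k \<le> 1 + tt (Suc k) \<and> (k \<ge> 1 \<longrightarrow> -1 < av k)"
proof (induction k)
  case 0
  have "tt 1 > -2" using ratio[of 1] by (simp add: tt_def)
  then show ?case by simp
next
  case (Suc k)
  have d: "1 - av k \<ge> - tt (Suc k)" using Suc by simp
  have tpos: "- tt (Suc k) > 0" using ratio[of "Suc k"] by (simp add: tt_def)
  have dpos: "1 - av k > 0" using d tpos by linarith
  have g: "gg (Suc k) > 0" by (rule gg_pos)
  have "gg (Suc k) / (1 - av k) \<le> gg (Suc k) / (- tt (Suc k))"
    using d tpos g mult_pos_pos[OF dpos tpos] by (intro divide_left_mono) auto
  also have "\<dots> = 2 + tt (Suc (Suc k))" unfolding gg_def using tpos by simp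
  finally have up: "av (Suc k) \<le> 1 + tt (Suc (Suc k))" by (simp add: av.simps(2))
  have "gg (Suc k) / (1 - av k) > 0" using g dpos by simp
  hence "av (Suc k) > -1" by (simp add: av.simps(2))
  with up show ?case by simp
qed

lemma av_lt1: "av k < 1"
proof -
  have "tt (Suc k) < 0" using ratio[of "Suc k"] by (simp add: tt_def)
  thus ?thesis using av_bounds[of k] by linarith
qed

lemma av_gtm1: "k \<ge> 1 \<Longrightarrow> -1 < av k"
  using av_bounds by blast

definition vv :: "nat \<Rightarrow> real" where "vv k = av (Suc k)"

lemma vv_eq: "vv k = av (Suc k)" by (simp add: vv_def)

lemma vv_bounds: "-1 < vv k" "vv k < 1"
  using av_gtm1[of "Suc k"] av_lt1[of "Suc k"] by (auto simp: vv_def)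

lemma gg_av: "gg (Suc k) = (1 + av (Suc k)) * (1 - av k)"
proof -
  have "1 - av k > 0" using av_lt1[of k] by simp
  thus ?thesis by (simp add: av.simps(2))
qed

lemma T_phi: "Tp (Suc k) = pCons 0 (ph vv k) + phr vv k \<and> ph vv k + phr vv k = smult (1 - av k) (Tp k)"
proof (induction k)
  case 0 then show ?case by (simp add: one_pCons)
next
  case (Suc k)
  have A: "Tp (Suc k) = pCons 0 (ph vv k) + phr vv k" using Suc by blast
  have B: "ph vv k + phr vv k = smult (1 - av k) (Tp k)" using Suc by blast
  have S: "ph vv (Suc k) + phr vv (Suc k) = smult (1 - av (Suc k)) (Tp (Suc k))"
  proof -
    have "poly (ph vv (Suc k) + phr vv (Suc k)) x = poly (smult (1 - av (Suc k)) (Tp (Suc k))) x" for x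
      unfolding ph_Suc phr_Suc A by (simp add: vv_eq algebra_simps)
    thus ?thesis by (simp add: poly_eq_poly_eq_iff[symmetric] fun_eq_iff)
  qed
  have "poly (Tp (Suc (Suc k))) x = poly (pCons 0 (ph vv (Suc k)) + phr vv (Suc k)) x" for x
  proof -
    have b: "poly (ph vv k) x + poly (phr vv k) x = (1 - av k) * poly (Tp k) x"
      using arg_cong[OF B, of "\<lambda>p. poly p x"] by simp
    have a: "poly (Tp (Suc k)) x = x * poly (ph vv k) x + poly (phr vv k) x"
      using arg_cong[OF A, of "\<lambda>p. poly p x"] by simp
    have "poly (Tp (Suc (Suc k))) x = (1 + x) * poly (Tp (Suc k)) x - (1 + av (Suc k)) * ((1 - av k) * poly (Tp k) x) * x"
      by (simp add: gg_av algebra_simps)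
    also have "\<dots> = (1 + x) * (x * poly (ph vv k) x + poly (phr vv k) x) - (1 + av (Suc k)) * (poly (ph vv k) x + poly (phr vv k) x) * x"
      using a b by simp
    also have "\<dots> = poly (pCons 0 (ph vv (Suc k)) + phr vv (Suc k)) x"
      by (simp add: ph_Suc phr_Suc vv_eq algebra_simps)
    finally show ?thesis .
  qed
  hence "Tp (Suc (Suc k)) = pCons 0 (ph vv (Suc k)) + phr vv (Suc k)"
    by (simp add: poly_eq_poly_eq_iff[symmetric] fun_eq_iff)
  with S show ?case by simp
qed

lemma R_para: "Tp k = smult (inverse (1 - av k)) (ph vv k + phr vv k)"
proof -
  have "1 - av k \<noteq> 0" using av_lt1[of k] by simp
  thus ?thesis using T_phi[of k] by simp
qed

lemma Tp_deg: "degree (Tp k) = k"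
proof -
  have "degree (Tp k) \<le> k \<and> coeff (Tp k) k = 1"
  proof (cases k)
    case 0 then show ?thesis by simp
  next
    case (Suc m)
    have d: "degree (phr vv m) \<le> m" using ph_deg by blast
    have "degree (pCons 0 (ph vv m)) = Suc m" using ph_monic[of vv m] ph_nz[of vv m] by simp
    hence "degree (pCons 0 (ph vv m) + phr vv m) \<le> Suc m" using d
      by (intro degree_add_le) auto
    moreover have "coeff (pCons 0 (ph vv m) + phr vv m) (Suc m) = 1"
      using d ph_monic[of vv m] by (simp add: coeff_eq_0)
    ultimately show ?thesis using T_phi[of m] Suc by simp
  qed
  thus ?thesis by (metis le_degree le_antisym zero_neq_one)
qed

end

primrec cl :: "(nat \<Rightarrow> real) \<Rightarrow> nat \<Rightarrow> real list" where
  "cl v 0 = [1]"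
| "cl v (Suc n) = cl v n @ [- (\<Sum>j\<le>n. coeff (ph v (Suc n)) j * cl v n ! j)]"

definition cc :: "(nat \<Rightarrow> real) \<Rightarrow> nat \<Rightarrow> real" where "cc v n = cl v n ! n"
definition cz :: "(nat \<Rightarrow> real) \<Rightarrow> int \<Rightarrow> real" where "cz v k = cc v (nat \<bar>k\<bar>)"

lemma cl_len: "length (cl v n) = Suc n"
  by (induction n) auto

lemma cl_nth: "j \<le> n \<Longrightarrow> cl v n ! j = cc v j"
proof (induction n)
  case 0 then show ?case by (simp add: cc_def)
next
  case (Suc n)
  show ?case
  proof (cases "j = Suc n")
    case True then show ?thesis by (simp add: cc_def)
  next
    case False
    hence "j \<le> n" using Suc.prems by simp
    thus ?thesis using Suc.IH cl_len[of v n] by (simp add: nth_append)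
  qed
qed

lemma cc_0: "cc v 0 = 1" by (simp add: cc_def)

lemma cc_Suc: "cc v (Suc n) = - (\<Sum>j\<le>n. coeff (ph v (Suc n)) j * cc v j)"
proof -
  have "cc v (Suc n) = - (\<Sum>j\<le>n. coeff (ph v (Suc n)) j * cl v n ! j)"
    by (simp add: cc_def nth_append cl_len)
  also have "\<dots> = - (\<Sum>j\<le>n. coeff (ph v (Suc n)) j * cc v j)"
    by (simp add: cl_nth)
  finally show ?thesis .
qed

lemma cz_sym: "cz v (- k) = cz v k" by (simp add: cz_def)
lemma cz_nat: "cz v (int j) = cc v j" by (simp add: cz_def)

definition Lf :: "(nat \<Rightarrow> real) \<Rightarrow> real poly \<Rightarrow> nat \<Rightarrow> real" where
  "Lf v p k = (\<Sum>j\<le>degree p. coeff p j * cz v (int j - int k))"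

lemma Lf_bound: "degree p < K \<Longrightarrow> Lf v p k = (\<Sum>j<K. coeff p j * cz v (int j - int k))"
  unfolding Lf_def
  by (rule sum.mono_neutral_left) (auto simp: coeff_eq_0)

lemma Lf_add: "Lf v (p + q) k = Lf v p k + Lf v q k"
proof -
  define K where "K = Suc (max (degree p) (degree q))"
  have "degree (p + q) < K" unfolding K_def using degree_add_le_max[of p q] by simp
  hence "Lf v (p + q) k = (\<Sum>j<K. coeff (p + q) j * cz v (int j - int k))" by (rule Lf_bound)
  moreover have "Lf v p k = (\<Sum>j<K. coeff p j * cz v (int j - int k))" by (rule Lf_bound) (simp add: K_def)
  moreover have "Lf v q k = (\<Sum>j<K. coeff q j * cz v (int j - int k))" by (rule Lf_bound) (simp add: K_def)
  ultimately show ?thesis by (simp add: sum.distrib algebra_simps)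
qed

lemma Lf_smult: "Lf v (smult c p) k = c * Lf v p k"
proof -
  have "degree (smult c p) < Suc (degree p)" using degree_smult_le[of c p] by simp
  hence "Lf v (smult c p) k = (\<Sum>j<Suc (degree p). coeff (smult c p) j * cz v (int j - int k))" by (rule Lf_bound)
  moreover have "Lf v p k = (\<Sum>j<Suc (degree p). coeff p j * cz v (int j - int k))" by (rule Lf_bound) simp
  ultimately show ?thesis by (simp add: sum_distrib_left algebra_simps)
qed

lemma Lf_diff: "Lf v (p - q) k = Lf v p k - Lf v q k"
  using Lf_add[of v p "smult (-1) q" k] Lf_smult[of v "-1" q k] by simp

lemma Lf_shift: "Lf v (pCons 0 p) (Suc k) = Lf v p k"
proof -
  have d: "degree (pCons 0 p) < Suc (Suc (degree p))" by (cases "p = 0") auto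
  have "Lf v (pCons 0 p) (Suc k) = (\<Sum>j<Suc (Suc (degree p)). coeff (pCons 0 p) j * cz v (int j - int (Suc k)))"
    by (rule Lf_bound[OF d])
  also have "\<dots> = (\<Sum>j<Suc (degree p). coeff p j * cz v (int (Suc j) - int (Suc k)))"
    by (subst sum.lessThan_Suc_shift) simp
  also have "\<dots> = (\<Sum>j<Suc (degree p). coeff p j * cz v (int j - int k))" by simp
  also have "\<dots> = Lf v p k" by (rule Lf_bound[symmetric]) simp
  finally show ?thesis .
qed

lemma Lf_reflect:
  assumes "degree p = n" "k \<le> n"
  shows "Lf v (reflect_poly p) (n - k) = Lf v p k"
proof -
  have d: "degree (reflect_poly p) < Suc n" using degree_reflect_poly_le[of p] assms by simp
  have "Lf v (reflect_poly p) (n - k) = (\<Sum>j<Suc n. coeff (reflect_poly p) j * cz v (int j - int (n - k)))"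
    by (rule Lf_bound[OF d])
  also have "\<dots> = (\<Sum>j<Suc n. coeff p (n - j) * cz v (int j - int (n - k)))"
    using assms by (intro sum.cong) (auto simp: coeff_reflect_poly)
  also have "\<dots> = (\<Sum>j<Suc n. (\<lambda>i. coeff p i * cz v (int i - int k)) (n - j))"
  proof (intro sum.cong refl)
    fix j assume "j \<in> {..<Suc n}"
    hence j: "j \<le> n" by simp
    have "int j - int (n - k) = - (int (n - j) - int k)" using j assms by simp
    thus "coeff p (n - j) * cz v (int j - int (n - k)) = (\<lambda>i. coeff p i * cz v (int i - int k)) (n - j)"
      by (simp only: cz_sym)
  qed
  also have "\<dots> = (\<Sum>i<Suc n. coeff p i * cz v (int i - int k))"
    using sum.nat_diff_reindex[of "\<lambda>i. coeff p i * cz v (int i - int k)" "Suc n"] by simp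
  also have "\<dots> = Lf v p k" by (rule Lf_bound[symmetric]) (simp add: assms)
  finally show ?thesis .
qed

definition EE :: "(nat \<Rightarrow> real) \<Rightarrow> nat \<Rightarrow> real" where "EE v n = (\<Prod>k<n. 1 - (v k)\<^sup>2)"

lemma Lf_0: "Lf v p 0 = (\<Sum>j\<le>degree p. coeff p j * cc v j)"
  unfolding Lf_def by (simp add: cz_nat)

lemma orth: "(\<forall>k<n. Lf v (ph v n) k = 0) \<and> Lf v (ph v n) n = EE v n"
proof (induction n)
  case 0
  show ?case by (simp add: Lf_0 cc_0 EE_def)
next
  case (Suc n)
  have IH1: "\<And>k. k < n \<Longrightarrow> Lf v (ph v n) k = 0" using Suc by blast
  have IH2: "Lf v (ph v n) n = EE v n" using Suc by blast
  have dn: "degree (ph v n) = n" by (rule ph_monic)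
  have r: "phr v n = reflect_poly (ph v n)" by (rule phr_reflect)
  have L0: "Lf v (ph v (Suc n)) 0 = 0"
  proof -
    have "Lf v (ph v (Suc n)) 0 = (\<Sum>j\<le>Suc n. coeff (ph v (Suc n)) j * cc v j)"
      by (simp add: Lf_0 ph_monic)
    also have "\<dots> = (\<Sum>j\<le>n. coeff (ph v (Suc n)) j * cc v j) + cc v (Suc n)"
      by (simp add: ph_monic)
    also have "\<dots> = 0" by (simp add: cc_Suc)
    finally show ?thesis .
  qed
  have phrk: "Lf v (phr v n) k = Lf v (ph v n) (n - k)" if "k \<le> n" for k
  proof -
    have "Lf v (phr v n) (n - (n - k)) = Lf v (ph v n) (n - k)"
      unfolding r by (rule Lf_reflect[OF dn]) simp
    thus ?thesis using that by simp
  qed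
  have mid: "Lf v (ph v (Suc n)) (Suc k) = 0" if "k < n" for k
  proof -
    have "Lf v (ph v (Suc n)) (Suc k) = Lf v (ph v n) k - v n * Lf v (phr v n) (Suc k)"
      by (simp add: ph_Suc Lf_diff Lf_smult Lf_shift)
    also have "Lf v (phr v n) (Suc k) = Lf v (ph v n) (n - Suc k)" using that phrk by simp
    also have "\<dots> = 0" using that IH1 by simp
    finally show ?thesis using IH1 that by simp
  qed
  have A: "\<forall>k<Suc n. Lf v (ph v (Suc n)) k = 0"
  proof (intro allI impI)
    fix k assume "k < Suc n"
    thus "Lf v (ph v (Suc n)) k = 0" using L0 mid by (cases k) auto
  qed
  have phr0: "Lf v (phr v n) 0 = EE v n" using phrk[of 0] IH2 by simp
  have sh0: "Lf v (pCons 0 (ph v n)) 0 = v n * EE v n"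
    using L0 phr0 by (simp add: ph_Suc Lf_diff Lf_smult)
  have phrS: "Lf v (phr v n) (Suc n) = v n * EE v n"
  proof -
    have d1: "degree (pCons 0 (ph v n)) = Suc n" using dn ph_nz[of v n] by simp
    have "reflect_poly (pCons 0 (ph v n)) = reflect_poly (ph v n)"
      by (simp add: reflect_poly_pCons' ph_nz)
    hence "Lf v (phr v n) (Suc n - 0) = Lf v (pCons 0 (ph v n)) 0"
      unfolding r by (metis Lf_reflect[OF d1] zero_le)
    thus ?thesis using sh0 by simp
  qed
  have "Lf v (ph v (Suc n)) (Suc n) = EE v n - v n * (v n * EE v n)"
    by (simp add: ph_Suc Lf_diff Lf_smult Lf_shift IH2 phrS)
  also have "\<dots> = EE v (Suc n)" by (simp add: EE_def power2_eq_square algebra_simps)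
  finally show ?case using A by simp
qed

definition IP :: "(nat \<Rightarrow> real) \<Rightarrow> real poly \<Rightarrow> real poly \<Rightarrow> real" where
  "IP v p q = (\<Sum>l\<le>degree q. coeff q l * Lf v p l)"

lemma IP_bound: "degree q < K \<Longrightarrow> IP v p q = (\<Sum>l<K. coeff q l * Lf v p l)"
  unfolding IP_def by (rule sum.mono_neutral_left) (auto simp: coeff_eq_0)

lemma IP_add1: "IP v (p1 + p2) q = IP v p1 q + IP v p2 q"
  unfolding IP_def by (simp add: Lf_add sum.distrib algebra_simps)

lemma IP_smult1: "IP v (smult c p) q = c * IP v p q"
  unfolding IP_def by (simp add: Lf_smult sum_distrib_left algebra_simps)

lemma IP_double: "degree p < K \<Longrightarrow> degree q < K \<Longrightarrow>
   IP v p q = (\<Sum>l<K. \<Sum>j<K. coeff q l * coeff p j * cz v (int j - int l))"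
  by (simp add: IP_bound Lf_bound sum_distrib_left algebra_simps)

lemma IP_sym: "IP v p q = IP v q p"
proof -
  define K where "K = Suc (max (degree p) (degree q))"
  have dp: "degree p < K" and dq: "degree q < K" unfolding K_def by auto
  have "IP v p q = (\<Sum>l<K. \<Sum>j<K. coeff q l * coeff p j * cz v (int j - int l))"
    by (rule IP_double[OF dp dq])
  also have "\<dots> = (\<Sum>j<K. \<Sum>l<K. coeff q l * coeff p j * cz v (int j - int l))"
    by (rule sum.swap)
  also have "\<dots> = (\<Sum>j<K. \<Sum>l<K. coeff p j * coeff q l * cz v (int l - int j))"
  proof (intro sum.cong refl)
    fix j l
    have "int j - int l = - (int l - int j)" by simp
    thus "coeff q l * coeff p j * cz v (int j - int l) = coeff p j * coeff q l * cz v (int l - int j)"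
      by (simp only: cz_sym mult.commute)
  qed
  also have "\<dots> = IP v q p" by (rule IP_double[OF dq dp, symmetric])
  finally show ?thesis .
qed

lemma IP_ph_low: "degree q < n \<Longrightarrow> IP v (ph v n) q = 0"
  unfolding IP_def using orth[of n v] by (intro sum.neutral) auto

lemma IP_ph_top: "degree q = n \<Longrightarrow> IP v (ph v n) q = lead_coeff q * EE v n"
proof -
  assume d: "degree q = n"
  have "IP v (ph v n) q = (\<Sum>l<n. coeff q l * Lf v (ph v n) l) + coeff q n * Lf v (ph v n) n"
    unfolding IP_def d by (simp add: lessThan_Suc_atMost[symmetric])
  also have "\<dots> = coeff q n * EE v n" using orth[of n v] by simp
  finally show ?thesis using d by simp
qed

lemma EE_pos: "(\<And>k. \<bar>v k\<bar> < 1) \<Longrightarrow> EE v n > 0"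
  unfolding EE_def
proof (intro prod_pos)
  fix k assume h: "\<And>k. \<bar>v k\<bar> < 1"
  have "(v k)\<^sup>2 < 1" using h[of k] by (simp add: abs_square_less_1)
  thus "0 < 1 - (v k)\<^sup>2" by simp
qed

lemma IP_pos:
  assumes v: "\<And>k. \<bar>v k\<bar> < 1"
  shows "p \<noteq> 0 \<Longrightarrow> IP v p p > 0"
proof (induction "degree p" arbitrary: p rule: less_induct)
  case less
  define d where "d = degree p"
  define c where "c = lead_coeff p"
  define r where "r = p - smult c (ph v d)"
  have cnz: "c \<noteq> 0" using less.prems by (simp add: c_def)
  have pe: "p = smult c (ph v d) + r" by (simp add: r_def)
  have dr: "degree r \<le> d"
  proof -
    have "degree (smult c (ph v d)) \<le> d" using degree_smult_le[of c "ph v d"] by (simp add: ph_monic)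
    thus ?thesis unfolding r_def by (intro degree_diff_le) (auto simp: d_def)
  qed
  have cr: "coeff r d = 0" by (simp add: r_def c_def d_def ph_monic)
  have rr: "IP v r r \<ge> 0"
  proof (cases "r = 0")
    case True then show ?thesis by (simp add: IP_def)
  next
    case False
    hence "degree r < d" using dr cr by (metis le_antisym le_neq_implies_less leading_coeff_0_iff)
    hence "IP v r r > 0" using less.hyps[of r] False d_def by simp
    thus ?thesis by simp
  qed
  have drl: "r \<noteq> 0 \<Longrightarrow> degree r < d" using dr cr by (metis le_antisym le_neq_implies_less leading_coeff_0_iff)
  have z: "IP v (ph v d) r = 0"
  proof (cases "r = 0")
    case True then show ?thesis by (simp add: IP_def)
  next
    case False then show ?thesis using drl by (intro IP_ph_low) auto
  qed
  have "IP v p p = c * IP v (ph v d) p + IP v r p"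
    by (subst (1) pe) (simp add: IP_add1 IP_smult1)
  also have "IP v (ph v d) p = c * EE v d" using IP_ph_top[of p d v] by (simp add: d_def c_def)
  also have "IP v r p = IP v p r" by (rule IP_sym)
  also have "IP v p r = c * IP v (ph v d) r + IP v r r"
    by (subst (1) pe) (simp add: IP_add1 IP_smult1)
  finally have "IP v p p = c * c * EE v d + IP v r r" using z by simp
  moreover have "c * c * EE v d > 0"
  proof -
    have "EE v d > 0" by (rule EE_pos) (rule v)
    moreover have "c * c > 0" using cnz not_real_square_gt_zero by blast
    ultimately show ?thesis by simp
  qed
  ultimately show ?case using rr by simp
qed

definition QF :: "(nat \<Rightarrow> real) \<Rightarrow> nat \<Rightarrow> (nat \<Rightarrow> real) \<Rightarrow> real" where
  "QF v N w = (\<Sum>j<N. \<Sum>l<N. w j * w l * cz v (int j - int l))"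

lemma QF_IP: "QF v N w = IP v (Poly (map w [0..<N])) (Poly (map w [0..<N]))"
proof -
  define p where "p = Poly (map w [0..<N])"
  have cp: "coeff p j = (if j < N then w j else 0)" for j
    by (simp add: p_def nth_default_def)
  have dp: "degree p < Suc N" using degree_Poly[of "map w [0..<N]"] by (simp add: p_def)
  have "IP v p p = (\<Sum>l<Suc N. \<Sum>j<Suc N. coeff p l * coeff p j * cz v (int j - int l))"
    by (rule IP_double[OF dp dp])
  also have "\<dots> = (\<Sum>l<N. \<Sum>j<N. coeff p l * coeff p j * cz v (int j - int l))"
    by (simp add: cp)
  also have "\<dots> = (\<Sum>l<N. \<Sum>j<N. w l * w j * cz v (int j - int l))"
    by (intro sum.cong refl) (simp add: cp)
  also have "\<dots> = (\<Sum>j<N. \<Sum>l<N. w l * w j * cz v (int j - int l))" by (rule sum.swap)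
  also have "\<dots> = QF v N w" unfolding QF_def
    by (intro sum.cong refl) (simp add: algebra_simps)
  finally show ?thesis by (simp add: p_def)
qed

lemma QF_nonneg: "(\<And>k. \<bar>v k\<bar> < 1) \<Longrightarrow> QF v N w \<ge> 0"
  using IP_pos[of v "Poly (map w [0..<N])"] unfolding QF_IP
  by (cases "Poly (map w [0..<N]) = 0") (auto simp: IP_def)

lemma int_cos:
  "((\<lambda>\<theta>. cos (real_of_int m * \<theta>)) has_integral (if m = 0 then 2*pi else 0)) {0..2*pi}"
proof (cases "m = 0")
  case True
  have "((\<lambda>\<theta>::real. 1) has_integral (2*pi - 0)) {0..2*pi}"
  proof (rule fundamental_theorem_of_calculus[where f="\<lambda>x. x"])
    show "0 \<le> 2*pi" by simp
    fix x :: real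
    show "((\<lambda>x. x) has_vector_derivative 1) (at x within {0..2*pi})"
      by (auto intro!: derivative_eq_intros)
  qed
  then show ?thesis using True by simp
next
  case False
  have "((\<lambda>\<theta>. cos (real_of_int m * \<theta>)) has_integral
        (sin (real_of_int m * (2*pi)) / real_of_int m - sin (real_of_int m * 0) / real_of_int m)) {0..2*pi}"
  proof (rule fundamental_theorem_of_calculus)
    show "0 \<le> 2*pi" by simp
    fix x :: real
    have "((\<lambda>\<theta>. sin (real_of_int m * \<theta>) / real_of_int m) has_real_derivative cos (real_of_int m * x)) (at x)"
      using False by (auto intro!: derivative_eq_intros)
    thus "((\<lambda>\<theta>. sin (real_of_int m * \<theta>) / real_of_int m) has_vector_derivative cos (real_of_int m * x)) (at x within {0..2*pi})"
      by (simp add: has_real_derivative_iff_has_vector_derivative has_vector_derivative_at_within)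
  qed
  moreover have "sin (real_of_int m * (2*pi)) = 0" using sin_int_2pin[of m] by (simp add: mult.commute)
  ultimately show ?thesis using False by simp
qed

lemma int_sin:
  "((\<lambda>\<theta>. sin (real_of_int m * \<theta>)) has_integral 0) {0..2*pi}"
proof (cases "m = 0")
  case True
  then show ?thesis by simp
next
  case False
  have "((\<lambda>\<theta>. sin (real_of_int m * \<theta>)) has_integral
        ((- cos (real_of_int m * (2*pi)) / real_of_int m) - (- cos (real_of_int m * 0) / real_of_int m))) {0..2*pi}"
  proof (rule fundamental_theorem_of_calculus)
    show "0 \<le> 2*pi" by simp
    fix x :: real
    have "((\<lambda>\<theta>. - cos (real_of_int m * \<theta>) / real_of_int m) has_real_derivative sin (real_of_int m * x)) (at x)"
      using False by (auto intro!: derivative_eq_intros)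
    thus "((\<lambda>\<theta>. - cos (real_of_int m * \<theta>) / real_of_int m) has_vector_derivative sin (real_of_int m * x)) (at x within {0..2*pi})"
      by (simp add: has_real_derivative_iff_has_vector_derivative has_vector_derivative_at_within)
  qed
  moreover have "cos (real_of_int m * (2*pi)) = 1" using cos_int_2pin[of m] by (simp add: mult.commute)
  ultimately show ?thesis by simp
qed

definition fN :: "(nat \<Rightarrow> real) \<Rightarrow> nat \<Rightarrow> real \<Rightarrow> real" where
  "fN v N \<theta> = (\<Sum>j<N. \<Sum>l<N. cz v (int j - int l) * cos (real_of_int (int j - int l) * \<theta>)) / (2*pi*real N)"

lemma fN_nonneg:
  assumes v: "\<And>k. \<bar>v k\<bar> < 1"
  shows "fN v N \<theta> \<ge> 0"
proof -
  have "(\<Sum>j<N. \<Sum>l<N. cz v (int j - int l) * cos (real_of_int (int j - int l) * \<theta>))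
      = QF v N (\<lambda>j. cos (real j * \<theta>)) + QF v N (\<lambda>j. sin (real j * \<theta>))"
    unfolding QF_def sum.distrib[symmetric]
  proof (intro sum.cong refl)
    fix j l
    have "real_of_int (int j - int l) * \<theta> = real j * \<theta> - real l * \<theta>" by (simp add: algebra_simps)
    thus "cz v (int j - int l) * cos (real_of_int (int j - int l) * \<theta>) =
       cos (real j * \<theta>) * cos (real l * \<theta>) * cz v (int j - int l) +
       sin (real j * \<theta>) * sin (real l * \<theta>) * cz v (int j - int l)"
      by (simp add: cos_diff algebra_simps)
  qed
  moreover have "QF v N (\<lambda>j. cos (real j * \<theta>)) \<ge> 0" "QF v N (\<lambda>j. sin (real j * \<theta>)) \<ge> 0"
    using QF_nonneg[OF v] by auto
  ultimately show ?thesis unfolding fN_def by (simp add: divide_nonneg_pos)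
qed

definition I0 :: "int \<Rightarrow> real" where "I0 m = (if m = 0 then 2*pi else 0)"

definition Sc :: "(nat \<Rightarrow> real) \<Rightarrow> nat \<Rightarrow> int \<Rightarrow> real" where
  "Sc v N r = (\<Sum>j<N. \<Sum>l<N. if int j - int l = r then cz v (int j - int l) else 0)"

lemma count_aux: "(\<Sum>l<N. if l + k < N then c else 0) = real (N - k) * (c::real)"
proof -
  have "(\<Sum>l<N. if l + k < N then c else 0) = (\<Sum>l\<in>{..<N-k}. c)"
    by (rule sum.mono_neutral_cong_right) auto
  thus ?thesis by simp
qed

lemma Sc_eq: "Sc v N r = real (N - nat \<bar>r\<bar>) * cz v r"
proof (cases "r \<ge> 0")
  case True
  define k where "k = nat r"
  have rk: "r = int k" using True by (simp add: k_def)
  have "Sc v N r = (\<Sum>l<N. \<Sum>j<N. if j = l + k then cz v r else 0)"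
    unfolding Sc_def by (subst sum.swap) (intro sum.cong refl, auto simp: rk)
  also have "\<dots> = (\<Sum>l<N. if l + k < N then cz v r else 0)"
    by (intro sum.cong refl) (simp add: sum.delta)
  also have "\<dots> = real (N - k) * cz v r" by (rule count_aux)
  finally show ?thesis using rk by simp
next
  case False
  define k where "k = nat (- r)"
  have rk: "r = - int k" using False by (simp add: k_def)
  have "Sc v N r = (\<Sum>j<N. \<Sum>l<N. if l = j + k then cz v r else 0)"
    unfolding Sc_def by (intro sum.cong refl, auto simp: rk)
  also have "\<dots> = (\<Sum>j<N. if j + k < N then cz v r else 0)"
    by (intro sum.cong refl) (simp add: sum.delta)
  also have "\<dots> = real (N - k) * cz v r" by (rule count_aux)
  finally show ?thesis using rk by simp
qed

lemma fN_cos_int: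
  "((\<lambda>\<theta>. fN v N \<theta> * cos (real_of_int r * \<theta>)) has_integral (Sc v N r + Sc v N (-r)) / (2 * real N)) {0..2*pi}"
proof -
  let ?A = "\<lambda>j l. cz v (int j - int l) / (2*pi*real N)"
  let ?m = "\<lambda>j l. int j - int l"
  have eq: "fN v N \<theta> * cos (real_of_int r * \<theta>) =
     (\<Sum>j<N. \<Sum>l<N. ?A j l * ((cos (real_of_int (?m j l + r) * \<theta>) + cos (real_of_int (?m j l - r) * \<theta>)) / 2))" for \<theta>
  proof -
    have "fN v N \<theta> * cos (real_of_int r * \<theta>) =
       (\<Sum>j<N. \<Sum>l<N. ?A j l * (cos (real_of_int (?m j l) * \<theta>) * cos (real_of_int r * \<theta>)))"
      unfolding fN_def sum_divide_distrib sum_distrib_right by (intro sum.cong refl) (simp add: field_simps)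
    also have "\<dots> = (\<Sum>j<N. \<Sum>l<N. ?A j l * ((cos (real_of_int (?m j l + r) * \<theta>) + cos (real_of_int (?m j l - r) * \<theta>)) / 2))"
    proof (intro sum.cong refl)
      fix j l
      have a: "real_of_int (?m j l + r) * \<theta> = real_of_int (?m j l) * \<theta> + real_of_int r * \<theta>"
        by (simp add: algebra_simps)
      have b: "real_of_int (?m j l - r) * \<theta> = real_of_int (?m j l) * \<theta> - real_of_int r * \<theta>"
        by (simp add: algebra_simps)
      show "?A j l * (cos (real_of_int (?m j l) * \<theta>) * cos (real_of_int r * \<theta>)) =
          ?A j l * ((cos (real_of_int (?m j l + r) * \<theta>) + cos (real_of_int (?m j l - r) * \<theta>)) / 2)"
        unfolding a b by (simp add: cos_add cos_diff)
    qed
    finally show ?thesis .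
  qed
  have "((\<lambda>\<theta>. \<Sum>j<N. \<Sum>l<N. ?A j l * ((cos (real_of_int (?m j l + r) * \<theta>) + cos (real_of_int (?m j l - r) * \<theta>)) / 2))
     has_integral (\<Sum>j<N. \<Sum>l<N. ?A j l * ((I0 (?m j l + r) + I0 (?m j l - r)) / 2))) {0..2*pi}"
    using int_cos unfolding I0_def[symmetric]
    by (intro has_integral_sum finite_lessThan has_integral_mult_right has_integral_divide has_integral_add)
  moreover have "(\<Sum>j<N. \<Sum>l<N. ?A j l * ((I0 (?m j l + r) + I0 (?m j l - r)) / 2)) = (Sc v N r + Sc v N (-r)) / (2 * real N)"
  proof -
    have "(\<Sum>j<N. \<Sum>l<N. ?A j l * ((I0 (?m j l + r) + I0 (?m j l - r)) / 2)) =
        (\<Sum>j<N. \<Sum>l<N. ((if ?m j l = r then cz v (?m j l) else 0) + (if ?m j l = -r then cz v (?m j l) else 0)) / (2 * real N))"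
      by (intro sum.cong refl) (auto simp: I0_def field_simps)
    also have "\<dots> = (Sc v N r + Sc v N (-r)) / (2 * real N)"
      unfolding Sc_def by (simp only: add_divide_distrib sum_divide_distrib sum.distrib)
    finally show ?thesis .
  qed
  ultimately show ?thesis using eq by simp
qed

lemma fN_sin_int:
  "((\<lambda>\<theta>. fN v N \<theta> * sin (real_of_int r * \<theta>)) has_integral 0) {0..2*pi}"
proof -
  let ?A = "\<lambda>j l. cz v (int j - int l) / (2*pi*real N)"
  let ?m = "\<lambda>j l. int j - int l"
  have eq: "fN v N \<theta> * sin (real_of_int r * \<theta>) =
     (\<Sum>j<N. \<Sum>l<N. ?A j l * ((sin (real_of_int (r + ?m j l) * \<theta>) + sin (real_of_int (r - ?m j l) * \<theta>)) / 2))" for \<theta>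
  proof -
    have "fN v N \<theta> * sin (real_of_int r * \<theta>) =
       (\<Sum>j<N. \<Sum>l<N. ?A j l * (cos (real_of_int (?m j l) * \<theta>) * sin (real_of_int r * \<theta>)))"
      unfolding fN_def sum_divide_distrib sum_distrib_right by (intro sum.cong refl) (simp add: field_simps)
    also have "\<dots> = (\<Sum>j<N. \<Sum>l<N. ?A j l * ((sin (real_of_int (r + ?m j l) * \<theta>) + sin (real_of_int (r - ?m j l) * \<theta>)) / 2))"
    proof (intro sum.cong refl)
      fix j l
      have a: "real_of_int (r + ?m j l) * \<theta> = real_of_int r * \<theta> + real_of_int (?m j l) * \<theta>"
        by (simp add: algebra_simps)
      have b: "real_of_int (r - ?m j l) * \<theta> = real_of_int r * \<theta> - real_of_int (?m j l) * \<theta>"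
        by (simp add: algebra_simps)
      show "?A j l * (cos (real_of_int (?m j l) * \<theta>) * sin (real_of_int r * \<theta>)) =
          ?A j l * ((sin (real_of_int (r + ?m j l) * \<theta>) + sin (real_of_int (r - ?m j l) * \<theta>)) / 2)"
        unfolding a b by (simp add: sin_add sin_diff)
    qed
    finally show ?thesis .
  qed
  have "((\<lambda>\<theta>. \<Sum>j<N. \<Sum>l<N. ?A j l * ((sin (real_of_int (r + ?m j l) * \<theta>) + sin (real_of_int (r - ?m j l) * \<theta>)) / 2))
     has_integral (\<Sum>j<N. \<Sum>l<N. ?A j l * ((0 + 0) / 2))) {0..2*pi}"
    by (intro has_integral_sum finite_lessThan has_integral_mult_right has_integral_divide has_integral_add int_sin)
  thus ?thesis using eq by simp
qed

definition hN :: "(nat \<Rightarrow> real) \<Rightarrow> nat \<Rightarrow> real \<Rightarrow> real" where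
  "hN v N \<theta> = indicator {0..2*pi} \<theta> * fN v N \<theta>"

definition MN :: "(nat \<Rightarrow> real) \<Rightarrow> nat \<Rightarrow> real measure" where
  "MN v N = density lborel (\<lambda>\<theta>. ennreal (hN v N \<theta>))"

lemma fN_cont: "continuous_on UNIV (fN v N)"
  unfolding fN_def divide_inverse by (intro continuous_intros)

lemma fN_meas[measurable]: "fN v N \<in> borel_measurable borel"
  using fN_cont by (rule borel_measurable_continuous_onI)

lemma hN_meas[measurable]: "hN v N \<in> borel_measurable borel"
  unfolding hN_def by measurable

lemma sets_MN[simp]: "sets (MN v N) = sets borel"
  by (simp add: MN_def)

lemma space_MN[simp]: "space (MN v N) = UNIV"
  by (simp add: MN_def)

context
  fixes v :: "nat \<Rightarrow> real"
  assumes v: "\<And>k. \<bar>v k\<bar> < 1"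
begin

lemma hN_nonneg: "hN v N \<theta> \<ge> 0"
  unfolding hN_def using fN_nonneg[OF v] by (simp add: indicator_def)

lemma integral_MN:
  fixes g :: "real \<Rightarrow> real"
  assumes g: "continuous_on UNIV g"
  shows "integral\<^sup>L (MN v N) g = integral {0..2*pi} (\<lambda>\<theta>. fN v N \<theta> * g \<theta>)"
proof -
  have gm: "g \<in> borel_measurable borel" using g by (rule borel_measurable_continuous_onI)
  have "integral\<^sup>L (MN v N) g = integral\<^sup>L lborel (\<lambda>\<theta>. hN v N \<theta> *\<^sub>R g \<theta>)"
    unfolding MN_def using gm hN_nonneg by (subst integral_density) auto
  also have "\<dots> = (LINT \<theta>:{0..2*pi}|lborel. fN v N \<theta> * g \<theta>)"
    unfolding set_lebesgue_integral_def hN_def by (simp add: algebra_simps)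
  also have "\<dots> = integral {0..2*pi} (\<lambda>\<theta>. fN v N \<theta> * g \<theta>)"
  proof (rule set_borel_integral_eq_integral(2))
    show "set_integrable lborel {0..2*pi} (\<lambda>\<theta>. fN v N \<theta> * g \<theta>)"
      using fN_cont g by (intro borel_integrable_atLeastAtMost' continuous_intros)
         (auto intro: continuous_on_subset)
  qed
  finally show ?thesis .
qed

lemma MN_cos: "integral\<^sup>L (MN v N) (\<lambda>\<theta>. cos (real_of_int r * \<theta>)) = (Sc v N r + Sc v N (-r)) / (2 * real N)"
  by (subst integral_MN) (auto intro!: continuous_intros integral_unique fN_cos_int)

lemma MN_sin: "integral\<^sup>L (MN v N) (\<lambda>\<theta>. sin (real_of_int r * \<theta>)) = 0"
  by (subst integral_MN) (auto intro!: continuous_intros integral_unique fN_sin_int)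

lemma MN_cos': "integral\<^sup>L (MN v N) (\<lambda>\<theta>. cos (real_of_int r * \<theta>)) = real (N - nat \<bar>r\<bar>) / real N * cz v r"
  unfolding MN_cos Sc_eq by (simp add: cz_sym field_simps)

lemma cz0: "cz v 0 = 1" by (simp add: cz_def cc_0)

lemma integrable_hN: "integrable lborel (hN v N)"
proof -
  have "set_integrable lborel {0..2*pi} (fN v N)"
    using fN_cont by (intro borel_integrable_atLeastAtMost') (auto intro: continuous_on_subset)
  thus ?thesis unfolding set_integrable_def hN_def by simp
qed

lemma emeasure_MN: "N > 0 \<Longrightarrow> emeasure (MN v N) UNIV = 1"
proof -
  assume N: "N > 0"
  have "emeasure (MN v N) UNIV = (\<integral>\<^sup>+ x. ennreal (hN v N x) \<partial>lborel)"
    unfolding MN_def by (subst emeasure_density) auto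
  also have "\<dots> = ennreal (integral\<^sup>L lborel (hN v N))"
    by (rule nn_integral_eq_integral[OF integrable_hN]) (simp add: hN_nonneg)
  also have "integral\<^sup>L lborel (hN v N) = integral\<^sup>L (MN v N) (\<lambda>\<theta>. cos (real_of_int 0 * \<theta>))"
    unfolding MN_def using hN_nonneg by (subst integral_density) auto
  also have "\<dots> = 1" unfolding MN_cos' using N by (simp add: cz0)
  finally show ?thesis by simp
qed

lemma rd_MN: "N > 0 \<Longrightarrow> real_distribution (MN v N)"
  unfolding real_distribution_def real_distribution_axioms_def
  by (auto intro!: prob_spaceI simp: emeasure_MN)

lemma MN_mass: "N > 0 \<Longrightarrow> measure (MN v N) {-1<..8} = 1"
proof -
  assume N: "N > 0"
  have "emeasure (MN v N) {-1<..8} = (\<integral>\<^sup>+ x. ennreal (hN v N x) * indicator {-1<..8} x \<partial>lborel)"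
    unfolding MN_def by (subst emeasure_density) auto
  also have "\<dots> = (\<integral>\<^sup>+ x. ennreal (hN v N x) \<partial>lborel)"
  proof (rule nn_integral_cong)
    fix x :: real
    have "2*pi < 8" using pi_less_4 by simp
    thus "ennreal (hN v N x) * indicator {-1<..8} x = ennreal (hN v N x)"
      by (auto simp: hN_def indicator_def)
  qed
  also have "\<dots> = emeasure (MN v N) UNIV"
    unfolding MN_def by (subst emeasure_density) auto
  finally show ?thesis using emeasure_MN[OF N] by (simp add: measure_def)
qed

lemma tight_MN: "tight (\<lambda>n. MN v (Suc n))"
  unfolding tight_def
proof (intro conjI allI impI)
  fix n show "real_distribution (MN v (Suc n))" by (rule rd_MN) simp
next
  fix e :: real assume "e > 0"
  thus "\<exists>a b::real. a < b \<and> (\<forall>n. measure (MN v (Suc n)) {a<..b} > 1 - e)"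
    by (intro exI[of _ "-1"] exI[of _ 8]) (simp add: MN_mass)
qed

lemma ratio_lim: "(\<lambda>n. real (Suc n - k) / real (Suc n)) \<longlonglongrightarrow> 1"
proof -
  have ev: "eventually (\<lambda>n. 1 - real k * (1 / real (Suc n)) = real (Suc n - k) / real (Suc n)) sequentially"
    using eventually_ge_at_top[of k] by eventually_elim (simp add: of_nat_diff field_simps)
  have "(\<lambda>n. 1 / real (Suc n)) \<longlonglongrightarrow> 0"
    using LIMSEQ_Suc[OF lim_1_over_n] by simp
  hence "(\<lambda>n. 1 - real k * (1 / real (Suc n))) \<longlonglongrightarrow> 1 - real k * 0"
    by (intro tendsto_intros)
  thus ?thesis using Lim_transform_eventually[OF _ ev] by simp
qed

lemma exists_M:
  "\<exists>M. real_distribution M \<and> (\<forall>r. integral\<^sup>L M (\<lambda>\<theta>. cos (real_of_int r * \<theta>)) = cz v r)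
      \<and> (\<forall>r. integral\<^sup>L M (\<lambda>\<theta>. sin (real_of_int r * \<theta>)) = 0)"
proof -
  obtain s M where s: "strict_mono (s :: nat \<Rightarrow> nat)" and M: "real_distribution M"
    and wc: "weak_conv_m ((\<lambda>n. MN v (Suc n)) \<circ> id \<circ> s) M"
    using tight_imp_convergent_subsubsequence[OF tight_MN, of id] by (auto simp: strict_mono_def)
  have rd: "\<And>n. real_distribution (((\<lambda>n. MN v (Suc n)) \<circ> id \<circ> s) n)"
    by (simp add: rd_MN)
  have lim: "(\<lambda>n. integral\<^sup>L (((\<lambda>n. MN v (Suc n)) \<circ> id \<circ> s) n) f) \<longlonglongrightarrow> integral\<^sup>L M f"
    if "\<And>x. isCont f x" "\<And>x. norm (f x) \<le> 1" for f :: "real \<Rightarrow> real"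
    by (rule weak_conv_imp_integral_bdd_continuous_conv[OF rd M wc that])
  have C: "integral\<^sup>L M (\<lambda>\<theta>. cos (real_of_int r * \<theta>)) = cz v r" for r
  proof -
    have a: "(\<lambda>n. integral\<^sup>L (((\<lambda>n. MN v (Suc n)) \<circ> id \<circ> s) n) (\<lambda>\<theta>. cos (real_of_int r * \<theta>)))
        \<longlonglongrightarrow> integral\<^sup>L M (\<lambda>\<theta>. cos (real_of_int r * \<theta>))"
      by (rule lim) (auto intro!: continuous_intros)
    have "(\<lambda>n. real (Suc n - nat \<bar>r\<bar>) / real (Suc n) * cz v r) \<longlonglongrightarrow> 1 * cz v r"
      by (intro tendsto_intros ratio_lim)
    hence "(\<lambda>n. integral\<^sup>L (MN v (Suc n)) (\<lambda>\<theta>. cos (real_of_int r * \<theta>))) \<longlonglongrightarrow> cz v r"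
      unfolding MN_cos' by simp
    from LIMSEQ_subseq_LIMSEQ[OF this s]
    have b: "(\<lambda>n. integral\<^sup>L (((\<lambda>n. MN v (Suc n)) \<circ> id \<circ> s) n) (\<lambda>\<theta>. cos (real_of_int r * \<theta>))) \<longlonglongrightarrow> cz v r"
      by (simp add: comp_def)
    show ?thesis using LIMSEQ_unique[OF a b] .
  qed
  have S: "integral\<^sup>L M (\<lambda>\<theta>. sin (real_of_int r * \<theta>)) = 0" for r
  proof -
    have a: "(\<lambda>n. integral\<^sup>L (((\<lambda>n. MN v (Suc n)) \<circ> id \<circ> s) n) (\<lambda>\<theta>. sin (real_of_int r * \<theta>)))
        \<longlonglongrightarrow> integral\<^sup>L M (\<lambda>\<theta>. sin (real_of_int r * \<theta>))"
      by (rule lim) (auto intro!: continuous_intros)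
    have b: "(\<lambda>n. integral\<^sup>L (((\<lambda>n. MN v (Suc n)) \<circ> id \<circ> s) n) (\<lambda>\<theta>. sin (real_of_int r * \<theta>))) \<longlonglongrightarrow> 0"
      by (simp add: MN_sin)
    show ?thesis using LIMSEQ_unique[OF a b] .
  qed
  show ?thesis using M C S by blast
qed

end

lemma poly_ofr: "poly (map_poly complex_of_real p) z = (\<Sum>j\<le>degree p. complex_of_real (coeff p j) * z ^ j)"
  by (simp add: poly_altdef degree_map_poly coeff_map_poly)

lemma cis_re_im: "cis a = complex_of_real (cos a) + \<i> * complex_of_real (sin a)"
  by (simp add: complex_eq_iff)

lemma cis_pow_cnj: "cis \<theta> ^ j * cnj (cis \<theta> ^ l) = cis (real_of_int (int j - int l) * \<theta>)"
proof -
  have a: "cis \<theta> ^ j = cis (real j * \<theta>)" by (rule Complex.DeMoivre)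
  have b: "cis \<theta> ^ l = cis (real l * \<theta>)" by (rule Complex.DeMoivre)
  have "cis \<theta> ^ j * cnj (cis \<theta> ^ l) = cis (real j * \<theta>) * cis (- (real l * \<theta>))"
    unfolding a b cis_cnj ..
  also have "\<dots> = cis (real_of_int (int j - int l) * \<theta>)"
    unfolding cis_mult by (simp add: algebra_simps)
  finally show ?thesis .
qed

context
  fixes v :: "nat \<Rightarrow> real" and M :: "real measure"
  assumes M: "real_distribution M"
    and C: "\<And>r. integral\<^sup>L M (\<lambda>\<theta>. cos (real_of_int r * \<theta>)) = cz v r"
    and S: "\<And>r. integral\<^sup>L M (\<lambda>\<theta>. sin (real_of_int r * \<theta>)) = 0"
begin

interpretation real_distribution M by (rule M)

lemma integrable_bdd_cont:
  fixes f :: "real \<Rightarrow> 'b::{banach, second_countable_topology}"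
  assumes "continuous_on UNIV f" "\<And>x. norm (f x) \<le> B"
  shows "integrable M f"
proof (rule integrable_const_bound[where B=B])
  show "AE x in M. norm (f x) \<le> B" using assms by simp
  show "f \<in> borel_measurable M"
    using borel_measurable_continuous_onI[OF assms(1)] by (simp add: measurable_def)
qed

lemma M_cis: "integral\<^sup>L M (\<lambda>\<theta>. cis (real_of_int r * \<theta>)) = complex_of_real (cz v r)"
proof -
  have i1: "integrable M (\<lambda>\<theta>. complex_of_real (cos (real_of_int r * \<theta>)))"
    by (rule integrable_bdd_cont[where B=1]) (auto intro!: continuous_intros)
  have i2: "integrable M (\<lambda>\<theta>. \<i> * complex_of_real (sin (real_of_int r * \<theta>)))"
    by (rule integrable_bdd_cont[where B=1]) (auto intro!: continuous_intros simp: norm_mult)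
  have "integral\<^sup>L M (\<lambda>\<theta>. cis (real_of_int r * \<theta>)) =
      integral\<^sup>L M (\<lambda>\<theta>. complex_of_real (cos (real_of_int r * \<theta>))) + integral\<^sup>L M (\<lambda>\<theta>. \<i> * complex_of_real (sin (real_of_int r * \<theta>)))"
    unfolding cis_re_im by (rule Bochner_Integration.integral_add[OF i1 i2])
  also have "\<dots> = complex_of_real (cz v r)"
    by (simp add: C S)
  finally show ?thesis .
qed

definition mu :: "complex measure" where "mu = distr M borel cis"

lemma cont_meas_M: "continuous_on UNIV f \<Longrightarrow> f \<in> borel_measurable M"
  using borel_measurable_continuous_onI[of f] by (simp add: measurable_def)

lemma cis_meas: "cis \<in> borel_measurable M"
  by (rule cont_meas_M) (intro continuous_intros)

lemma mu_prob: "prob_space mu"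
  unfolding mu_def by (rule prob_space_distr) (rule cis_meas)

lemma mu_sets: "sets mu = sets borel" by (simp add: mu_def)

lemma mu_circle: "AE z in mu. cmod z = 1"
  unfolding mu_def by (subst AE_distr_iff) (auto simp: cis_meas)

lemma mu_integral:
  fixes F :: "complex \<Rightarrow> complex"
  assumes "continuous_on UNIV F"
  shows "integral\<^sup>L mu F = integral\<^sup>L M (\<lambda>\<theta>. F (cis \<theta>))"
  unfolding mu_def
  by (rule integral_distr[OF cis_meas]) (auto intro: borel_measurable_continuous_onI[OF assms])

lemma mom_pq:
  "integral\<^sup>L mu (\<lambda>z. poly (map_poly complex_of_real p) z * cnj (poly (map_poly complex_of_real q) z))
   = complex_of_real (\<Sum>j\<le>degree p. \<Sum>l\<le>degree q. coeff p j * coeff q l * cz v (int j - int l))"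
proof -
  have "integral\<^sup>L mu (\<lambda>z. poly (map_poly complex_of_real p) z * cnj (poly (map_poly complex_of_real q) z))
      = integral\<^sup>L M (\<lambda>\<theta>. poly (map_poly complex_of_real p) (cis \<theta>) * cnj (poly (map_poly complex_of_real q) (cis \<theta>)))"
    by (rule mu_integral) (auto intro!: continuous_intros)
  also have "\<dots> = integral\<^sup>L M (\<lambda>\<theta>. \<Sum>j\<le>degree p. \<Sum>l\<le>degree q.
        complex_of_real (coeff p j * coeff q l) * cis (real_of_int (int j - int l) * \<theta>))"
  proof (rule Bochner_Integration.integral_cong[OF refl])
    fix \<theta>
    note e = cis_pow_cnj
    show "poly (map_poly complex_of_real p) (cis \<theta>) * cnj (poly (map_poly complex_of_real q) (cis \<theta>)) =
        (\<Sum>j\<le>degree p. \<Sum>l\<le>degree q. complex_of_real (coeff p j * coeff q l) * cis (real_of_int (int j - int l) * \<theta>))"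
      unfolding poly_ofr cnj_sum sum_product
    proof (intro sum.cong refl)
      fix j l
      have "complex_of_real (coeff p j) * cis \<theta> ^ j * cnj (complex_of_real (coeff q l) * cis \<theta> ^ l)
          = complex_of_real (coeff p j * coeff q l) * (cis \<theta> ^ j * cnj (cis \<theta> ^ l))"
        by (simp add: algebra_simps)
      also have "\<dots> = complex_of_real (coeff p j * coeff q l) * cis (real_of_int (int j - int l) * \<theta>)"
        by (simp only: cis_pow_cnj)
      finally show "complex_of_real (coeff p j) * cis \<theta> ^ j * cnj (complex_of_real (coeff q l) * cis \<theta> ^ l)
          = complex_of_real (coeff p j * coeff q l) * cis (real_of_int (int j - int l) * \<theta>)" .
    qed
  qed
  also have "\<dots> = (\<Sum>j\<le>degree p. \<Sum>l\<le>degree q.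
        integral\<^sup>L M (\<lambda>\<theta>. complex_of_real (coeff p j * coeff q l) * cis (real_of_int (int j - int l) * \<theta>)))"
  proof -
    have int: "integrable M (\<lambda>\<theta>. complex_of_real (coeff p j * coeff q l) * cis (real_of_int (int j - int l) * \<theta>))" for j l
      by (rule integrable_bdd_cont[where B="\<bar>coeff p j * coeff q l\<bar>"]) (auto intro!: continuous_intros simp: norm_mult)
    have i2: "integrable M (\<lambda>\<theta>. \<Sum>l\<le>degree q. complex_of_real (coeff p j * coeff q l) * cis (real_of_int (int j - int l) * \<theta>))" for j
      by (intro Bochner_Integration.integrable_sum int)
    have "integral\<^sup>L M (\<lambda>\<theta>. \<Sum>j\<le>degree p. \<Sum>l\<le>degree q.
        complex_of_real (coeff p j * coeff q l) * cis (real_of_int (int j - int l) * \<theta>)) =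
      (\<Sum>j\<le>degree p. integral\<^sup>L M (\<lambda>\<theta>. \<Sum>l\<le>degree q.
        complex_of_real (coeff p j * coeff q l) * cis (real_of_int (int j - int l) * \<theta>)))"
      by (rule Bochner_Integration.integral_sum) (rule i2)
    also have "\<dots> = (\<Sum>j\<le>degree p. \<Sum>l\<le>degree q.
        integral\<^sup>L M (\<lambda>\<theta>. complex_of_real (coeff p j * coeff q l) * cis (real_of_int (int j - int l) * \<theta>)))"
      by (intro sum.cong refl Bochner_Integration.integral_sum int)
    finally show ?thesis .
  qed
  also have "\<dots> = (\<Sum>j\<le>degree p. \<Sum>l\<le>degree q. complex_of_real (coeff p j * coeff q l * cz v (int j - int l)))"
  proof (intro sum.cong refl)
    fix j l
    show "integral\<^sup>L M (\<lambda>\<theta>. complex_of_real (coeff p j * coeff q l) * cis (real_of_int (int j - int l) * \<theta>))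
       = complex_of_real (coeff p j * coeff q l * cz v (int j - int l))"
      by (simp only: integral_mult_right_zero M_cis of_real_mult)
  qed
  also have "\<dots> = complex_of_real (\<Sum>j\<le>degree p. \<Sum>l\<le>degree q. coeff p j * coeff q l * cz v (int j - int l))"
    by simp
  finally show ?thesis .
qed

end

lemma mapr_add: "map_poly complex_of_real (p + q) = map_poly complex_of_real p + map_poly complex_of_real q"
  by (intro poly_eqI) (simp add: coeff_map_poly)

lemma mapr_mult: "map_poly complex_of_real (p * q) = map_poly complex_of_real p * map_poly complex_of_real q"
  by (intro poly_eqI) (simp add: coeff_map_poly coeff_mult)

lemma mapr_smult: "map_poly complex_of_real (smult c p) = smult (complex_of_real c) (map_poly complex_of_real p)"
  by (intro poly_eqI) (simp add: coeff_map_poly)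

lemma mapr_prod: "map_poly complex_of_real (\<Prod>x\<in>A. f x) = (\<Prod>x\<in>A. map_poly complex_of_real (f x))"
  by (induction A rule: infinite_finite_induct) (auto simp: mapr_mult)

lemma mapr_degree: "degree (map_poly complex_of_real p) = degree p"
  by (rule degree_map_poly) simp

lemma mapr_reflect: "reflect_poly (map_poly complex_of_real p) = map_poly complex_of_real (reflect_poly p)"
  by (intro poly_eqI) (simp add: coeff_map_poly coeff_reflect_poly mapr_degree)

lemma reversed_ofr: "reversed_poly (map_poly complex_of_real p) = map_poly complex_of_real (reflect_poly p)"
proof -
  have "map_poly cnj (map_poly complex_of_real p) = map_poly complex_of_real p"
    by (intro poly_eqI) (simp add: coeff_map_poly)
  thus ?thesis unfolding reversed_poly_def by (simp add: mapr_reflect)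
qed

lemma IP_alt: "IP v p q = (\<Sum>j\<le>degree p. \<Sum>l\<le>degree q. coeff p j * coeff q l * cz v (int j - int l))"
  unfolding IP_def Lf_def sum_distrib_left
  by (subst sum.swap) (simp add: algebra_simps)

lemma IP_monom: "IP v p (monom 1 k) = Lf v p k"
proof -
  have "IP v p (monom 1 k) = (\<Sum>l\<le>k. if l = k then Lf v p l else 0)"
    unfolding IP_def by (intro sum.cong) (auto simp: degree_monom_eq coeff_monom)
  also have "\<dots> = Lf v p k" by (simp add: sum.delta)
  finally show ?thesis .
qed

lemma quad_root: "poly (map_poly complex_of_real [:(cmod w)\<^sup>2, -2 * Re w, 1:]) w = 0"
proof -
  have "poly (map_poly complex_of_real [:(cmod w)\<^sup>2, -2 * Re w, 1:]) w
      = complex_of_real ((cmod w)\<^sup>2) + w * (complex_of_real (-2 * Re w) + w)"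
    by (simp add: map_poly_pCons)
  also have "complex_of_real ((cmod w)\<^sup>2) = complex_of_real ((Re w)\<^sup>2 + (Im w)\<^sup>2)"
    by (simp add: cmod_power2)
  also have "complex_of_real ((Re w)\<^sup>2 + (Im w)\<^sup>2) + w * (complex_of_real (-2 * Re w) + w) = 0"
    by (simp add: complex_eq_iff power2_eq_square algebra_simps)
  finally show ?thesis .
qed

context
  fixes v :: "nat \<Rightarrow> real"
  assumes v: "\<And>k. \<bar>v k\<bar> < 1"
begin

lemma measure_part:
  "\<exists>\<mu>. nontrivial_circle_prob \<mu> \<and> monic_OPUC \<mu> (\<lambda>n. map_poly complex_of_real (ph v n))"
proof -
  obtain M where M: "real_distribution M"
    and C: "\<And>r. integral\<^sup>L M (\<lambda>\<theta>. cos (real_of_int r * \<theta>)) = cz v r"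
    and S: "\<And>r. integral\<^sup>L M (\<lambda>\<theta>. sin (real_of_int r * \<theta>)) = 0"
    using exists_M[where v=v] v by blast
  let ?mu = "mu M"
  note mom = mom_pq[OF M C S]
  interpret P: prob_space ?mu by (rule mu_prob[OF M C S])
  have nt: "measure ?mu (UNIV - F) > 0" if F: "finite F" for F
  proof (rule ccontr)
    assume "\<not> measure ?mu (UNIV - F) > 0"
    hence m0: "measure ?mu (UNIV - F) = 0" using measure_nonneg[of ?mu] by (metis less_eq_real_def)
    have sF: "UNIV - F \<in> sets ?mu"
      using F mu_sets[OF M C S] by (simp add: finite_imp_closed open_Diff)
    have e0: "emeasure ?mu (UNIV - F) = 0" using m0 P.emeasure_eq_measure by simp
    have AEF: "AE z in ?mu. z \<in> F"
      by (rule AE_I[OF _ e0 sF]) auto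
    define h where "h = (\<Prod>w\<in>F. [:(cmod w)\<^sup>2, -2 * Re w, (1::real):])"
    have hnz: "h \<noteq> 0" unfolding h_def using F by (simp add: prod_zero_iff)
    have hz: "poly (map_poly complex_of_real h) w = 0" if "w \<in> F" for w
      unfolding h_def mapr_prod poly_prod using F that quad_root
      by (simp add: prod_zero_iff) blast
    have "integral\<^sup>L ?mu (\<lambda>z. poly (map_poly complex_of_real h) z * cnj (poly (map_poly complex_of_real h) z)) = 0"
      by (rule integral_eq_zero_AE) (use AEF in eventually_elim, simp add: hz)
    moreover have "integral\<^sup>L ?mu (\<lambda>z. poly (map_poly complex_of_real h) z * cnj (poly (map_poly complex_of_real h) z))
        = complex_of_real (IP v h h)"
      unfolding mom IP_alt ..
    moreover have "IP v h h > 0" using IP_pos[where v=v and p=h] v hnz by blast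
    ultimately show False by simp
  qed
  have ntc: "nontrivial_circle_prob ?mu"
    unfolding nontrivial_circle_prob_def
    using P.prob_space_axioms mu_sets[OF M C S] mu_circle[OF M C S] nt by blast
  have opuc: "monic_OPUC ?mu (\<lambda>n. map_poly complex_of_real (ph v n))"
    unfolding monic_OPUC_def
  proof (intro allI conjI impI)
    fix n
    show "degree (map_poly complex_of_real (ph v n)) = n" by (simp add: mapr_degree ph_monic)
    show "lead_coeff (map_poly complex_of_real (ph v n)) = 1"
      by (simp add: mapr_degree ph_monic coeff_map_poly)
    fix k assume k: "k < n"
    have zk: "z ^ k = poly (map_poly complex_of_real (monom 1 k)) z" for z :: complex
      by (simp add: map_poly_monom poly_monom)
    have "integral\<^sup>L ?mu (\<lambda>z. poly (map_poly complex_of_real (ph v n)) z * cnj (z ^ k))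
       = integral\<^sup>L ?mu (\<lambda>z. poly (map_poly complex_of_real (ph v n)) z * cnj (poly (map_poly complex_of_real (monom 1 k)) z))"
      by (simp only: zk)
    also have "\<dots> = complex_of_real (IP v (ph v n) (monom 1 k))"
      unfolding mom IP_alt ..
    also have "\<dots> = 0" using orth[of n v] k by (simp add: IP_monom)
    finally show "integral\<^sup>L ?mu (\<lambda>z. poly (map_poly complex_of_real (ph v n)) z * cnj (z ^ k)) = 0" .
  qed
  show ?thesis using ntc opuc by blast
qed

end

context mt5 begin

lemma final: "para_orthogonal (\<lambda>n. map_poly complex_of_real (Rpoly \<rho> \<beta> \<tau> \<alpha> n))"
proof -
  have vb: "\<bar>vv k\<bar> < 1" for k using vv_bounds[of k] by simp
  obtain \<mu> where ntc: "nontrivial_circle_prob \<mu>" and op: "monic_OPUC \<mu> (\<lambda>n. map_poly complex_of_real (ph vv n))"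
    using measure_part[where v=vv] vb by blast
  have R: "map_poly complex_of_real (Rpoly \<rho> \<beta> \<tau> \<alpha> n) =
      smult (complex_of_real (inverse (1 - av n)))
        (map_poly complex_of_real (ph vv n) + smult 1 (reversed_poly (map_poly complex_of_real (ph vv n))))" for n
    unfolding R_eq R_para[of n] reversed_ofr phr_reflect[symmetric]
    by (simp add: mapr_smult mapr_add)
  have cnz: "complex_of_real (inverse (1 - av n)) \<noteq> 0" for n
    using av_lt1[of n] by simp
  have ex: "\<exists>c \<omega>. c \<noteq> 0 \<and> cmod \<omega> = 1 \<and>
        map_poly complex_of_real (Rpoly \<rho> \<beta> \<tau> \<alpha> n) =
        smult c (map_poly complex_of_real (ph vv n) + smult \<omega> (reversed_poly (map_poly complex_of_real (ph vv n))))" for n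
    using R[of n] cnz[of n] by (intro exI[of _ "complex_of_real (inverse (1 - av n))"] exI[of _ 1]) simp
  have deg: "degree (map_poly complex_of_real (Rpoly \<rho> \<beta> \<tau> \<alpha> n)) = n" for n
    by (simp add: mapr_degree R_eq Tp_deg)
  show ?thesis
    unfolding para_orthogonal_def using deg ex ntc op by blast
qed

end

theorem mainTheorem5:
  fixes \<rho> \<beta> \<tau> \<alpha> :: "nat \<Rightarrow> real"
  assumes rho_nz: "\<And>n. \<rho> n \<noteq> 0"
    and tau_nz: "\<And>n. \<tau> n \<noteq> 0"
    and ratio: "\<And>n. -2 < \<tau> n / \<rho> n \<and> \<tau> n / \<rho> n < 0"
    and beta0: "\<beta> 0 \<noteq> 0" "\<beta> 0 \<noteq> 1" "\<beta> 0 \<noteq> -1"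
    and beta_nz: "\<And>n. n \<ge> 1 \<Longrightarrow> \<beta> n \<noteq> 0"
    and tau1: "\<tau> 1 / \<rho> 1 = \<rho> 0 / \<beta> 0 * ((\<beta> 0)\<^sup>2 - 1)"
    and alpha_nz: "\<And>n. \<alpha> n \<noteq> 0"
    and alpha0: "\<alpha> 0 = \<tau> 0 / \<rho> 0"
    and alpha1: "\<alpha> 1 = \<rho> 0 * (\<beta> 0 - 1)"
    and alpha_rec: "\<And>n. n \<ge> 2 \<Longrightarrow>
          \<alpha> n = - (\<rho> (n - 1) - \<tau> (n - 1) / \<alpha> (n - 1)) + \<rho> (n - 1) * \<beta> (n - 1)"
    and extra1: "\<And>n. n \<ge> 2 \<Longrightarrow>
          \<alpha> n * \<rho> n = (2 * \<rho> n + \<tau> n) * (\<rho> (n - 1) * \<alpha> (n - 1) - \<tau> (n - 1)) + \<tau> n"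
    and extra2: "\<And>n. n \<ge> 2 \<Longrightarrow>
          \<alpha> n * \<rho> n = - \<rho> (n - 1) * \<beta> (n - 1) * (2 * \<rho> n + \<tau> n) * \<alpha> (n - 1)"
    and p_nz: "\<And>n. n \<ge> 1 \<Longrightarrow> \<alpha> n * \<rho> n - \<tau> n \<noteq> 0"
    and q_nz: "\<And>n. n \<ge> 1 \<Longrightarrow> \<alpha> (n - 1) * (\<alpha> n - \<rho> (n - 1) * \<beta> (n - 1)) \<noteq> 0"
  shows "para_orthogonal (\<lambda>n. map_poly complex_of_real (Rpoly \<rho> \<beta> \<tau> \<alpha> n))"
proof -
  interpret mt5 \<rho> \<beta> \<tau> \<alpha>
    by (unfold_locales) (fact assms)+
  show ?thesis by (rule final)
qed

end
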